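(* Let $\Theta_n^{(\eta)}$ and $\Theta_n^{(f)}$ be sets of real functions on the covariate space, where every $f\in\Theta_n^{(f)}$ satisfies $\|f\|_\infty\le N_n$ for a number $N_n>0$, and let $\Theta_n=\Theta_n^{(\eta)}\times\Theta_n^{(f)}$, whose elements $(\eta,f)$ are identified with the conditional densities $\mathcal{P}_{\eta,V}$, $V=e^f$. Then, for every $\epsilon>0$, $$\log N(3\epsilon,\Theta_n,d_n)\lesssim\log N(\epsilon/e^{N_n},\Theta_n^{(\eta)},\|\cdot\|_n)+\log N(\epsilon,\Theta_n^{(f)},\|\cdot\|_n),$$ where the constant implicit in $\lesssim$ does not depend on $\epsilon$ or $n$.
   Context: Let $Q$ be a probability measure on the covariate space $[0,1]^d$ (either the covariate distribution or the empirical measure of fixed design points). For functions $\eta$ and $V>0$ let $\mathcal{P}_{\eta,V}(y\mid x)=(2\pi V(x))^{-1/2}\exp(-(y-\eta(x))^2/(2V(x)))$, and let $d_n^2(\mathcal{P}_{\eta_1,V_1},\mathcal{P}_{\eta_2,V_2})=\int\!\!\int(\mathcal{P}_{\eta_1,V_1}^{1/2}-\mathcal{P}_{\eta_2,V_2}^{1/2})^2\,dy\,dQ(x)$. $\|\cdot\|_n$ denotes the norm of $L_2(Q)$ and $\|\cdot\|_\infty$ the supremum norm. $N(\epsilon,S,\rho)$ is the $\epsilon$-covering number of $S$ with respect to $\rho$ (minimal number of $\rho$-balls of radius $\epsilon$ covering $S$). *)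

theory Defs
  imports "HOL-Probability.Probability" "HOL-Library.Extended_Nat"
begin

definition unit_cube :: "(real ^ 'd) set" where
  "unit_cube = {x. \<forall>i. 0 \<le> x $ i \<and> x $ i \<le> 1}"

definition gauss_dens :: "('x \<Rightarrow> real) \<Rightarrow> ('x \<Rightarrow> real) \<Rightarrow> 'x \<Rightarrow> real \<Rightarrow> real" where
  "gauss_dens \<eta> V x y = exp (- (y - \<eta> x)\<^sup>2 / (2 * V x)) / sqrt (2 * pi * V x)"

definition dn_sq :: "'x measure \<Rightarrow> (('x \<Rightarrow> real) \<times> ('x \<Rightarrow> real))
                    \<Rightarrow> (('x \<Rightarrow> real) \<times> ('x \<Rightarrow> real)) \<Rightarrow> ennreal" where
  "dn_sq Q p q =
     (\<integral>\<^sup>+ x. (\<integral>\<^sup>+ y. ennreal ((sqrt (gauss_dens (fst p) (\<lambda>z. exp (snd p z)) x y)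
                               - sqrt (gauss_dens (fst q) (\<lambda>z. exp (snd q z)) x y))\<^sup>2) \<partial>lborel) \<partial>Q)"

definition L2_sq :: "'x measure \<Rightarrow> ('x \<Rightarrow> real) \<Rightarrow> ('x \<Rightarrow> real) \<Rightarrow> ennreal" where
  "L2_sq Q f g = (\<integral>\<^sup>+ x. ennreal ((f x - g x)\<^sup>2) \<partial>Q)"

text \<open>Covering number N(eps, S, rho) for a distance rho given through its square
  (closed balls of radius eps, centres in S); infinity if no finite cover exists.\<close>
definition covering_number :: "('a \<Rightarrow> 'a \<Rightarrow> ennreal) \<Rightarrow> real \<Rightarrow> 'a set \<Rightarrow> enat" where
  "covering_number dsq \<epsilon> S =
     (INF C \<in> {C. finite C \<and> C \<subseteq> S \<and> S \<subseteq> (\<Union>c\<in>C. {s. dsq c s \<le> ennreal (\<epsilon>\<^sup>2)})}.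
        enat (card C))"

end

theory Submission
  imports Defs
begin

definition gd :: "real \<Rightarrow> real \<Rightarrow> real \<Rightarrow> real" where
  "gd a p y = exp (- (y - a)\<^sup>2 / (2 * p)) / sqrt (2 * pi * p)"

definition KK :: "real \<Rightarrow> real \<Rightarrow> real \<Rightarrow> real \<Rightarrow> real" where
  "KK a b p q = sqrt (2 * sqrt (p * q) / (p + q)) * exp (- (a - b)\<^sup>2 / (4 * (p + q)))"

lemma expo: fixes p q a b y :: real assumes "p > 0" "q > 0"
  shows "- (y - a)\<^sup>2 / (2 * p) / 2 + - (y - b)\<^sup>2 / (2 * q) / 2
       = - (a - b)\<^sup>2 / (4 * (p + q)) + - (y - (a * q + b * p) / (p + q))\<^sup>2 / (2 * (2 * p * q / (p + q)))"
proof -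
  define D where "D = 4 * p * q * (p + q)"
  have pq: "p + q > 0" using assms by simp
  define Z where "Z = (y - a) * q + (y - b) * p"
  have t1: "- (y - a)\<^sup>2 / (2 * p) / 2 = (- (y - a)\<^sup>2 * (q * (p + q))) / D"
  proof -
    have "D = (4 * p) * (q * (p + q))" by (simp add: D_def algebra_simps)
    moreover have "q * (p + q) \<noteq> 0" using assms pq by simp
    ultimately show ?thesis by (simp add: nonzero_mult_divide_mult_cancel_right)
  qed
  have t2: "- (y - b)\<^sup>2 / (2 * q) / 2 = (- (y - b)\<^sup>2 * (p * (p + q))) / D"
  proof -
    have "D = (4 * q) * (p * (p + q))" by (simp add: D_def algebra_simps)
    moreover have "p * (p + q) \<noteq> 0" using assms pq by simp
    ultimately show ?thesis by (simp add: nonzero_mult_divide_mult_cancel_right)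
  qed
  have t3: "- (a - b)\<^sup>2 / (4 * (p + q)) = (- (a - b)\<^sup>2 * (p * q)) / D"
  proof -
    have "D = (4 * (p + q)) * (p * q)" by (simp add: D_def algebra_simps)
    moreover have "p * q \<noteq> 0" using assms by simp
    ultimately show ?thesis by (simp add: nonzero_mult_divide_mult_cancel_right)
  qed
  have e: "y - (a * q + b * p) / (p + q) = Z / (p + q)"
    using pq by (simp add: Z_def field_simps)
  have den: "(p + q)\<^sup>2 * (2 * (2 * p * q / (p + q))) = D"
    using pq by (simp add: D_def power2_eq_square field_simps)
  have "(Z / (p + q))\<^sup>2 / (2 * (2 * p * q / (p + q))) = Z\<^sup>2 / ((p + q)\<^sup>2 * (2 * (2 * p * q / (p + q))))"
    by (simp only: power_divide divide_divide_eq_left)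
  also have "\<dots> = Z\<^sup>2 / D" by (simp only: den)
  finally have t4': "(Z / (p + q))\<^sup>2 / (2 * (2 * p * q / (p + q))) = Z\<^sup>2 / D" .
  have t4: "- (y - (a * q + b * p) / (p + q))\<^sup>2 / (2 * (2 * p * q / (p + q))) = - Z\<^sup>2 / D"
    unfolding e using t4' by (metis minus_divide_left)
  have poly: "- (y - a)\<^sup>2 * (q * (p + q)) + - (y - b)\<^sup>2 * (p * (p + q)) = - (a - b)\<^sup>2 * (p * q) + - Z\<^sup>2"
    unfolding Z_def by (simp add: power2_eq_square algebra_simps)
  show ?thesis unfolding t1 t2 t3 t4 add_divide_distrib[symmetric] poly ..
qed

lemma pref0: fixes s P :: real assumes "s > 0" "P > 0"
  shows "2 * s / P / (2 * pi * (2 * s\<^sup>2 / P)) = 1 / (2 * pi * s)"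
  using assms pi_gt_zero by (simp add: field_simps power2_eq_square)

lemma pref: fixes p q :: real assumes "p > 0" "q > 0"
  shows "1 / sqrt (2 * pi * sqrt (p * q)) = sqrt (2 * sqrt (p * q) / (p + q)) * (1 / sqrt (2 * pi * (sqrt (2 * p * q / (p + q)))\<^sup>2))"
proof -
  have r: "sqrt (p * q) > 0" using assms by simp
  have pq: "p + q > 0" using assms by simp
  have "(sqrt (2 * p * q / (p + q)))\<^sup>2 = 2 * (sqrt (p * q))\<^sup>2 / (p + q)" using assms by simp
  hence "sqrt (2 * sqrt (p * q) / (p + q)) * (1 / sqrt (2 * pi * (sqrt (2 * p * q / (p + q)))\<^sup>2))
       = sqrt (2 * sqrt (p * q) / (p + q) / (2 * pi * (2 * (sqrt (p * q))\<^sup>2 / (p + q))))"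
    by (simp add: real_sqrt_divide real_sqrt_mult)
  also have "2 * sqrt (p * q) / (p + q) / (2 * pi * (2 * (sqrt (p * q))\<^sup>2 / (p + q))) = 1 / (2 * pi * sqrt (p * q))"
    by (rule pref0[OF r pq])
  finally show ?thesis by (simp add: real_sqrt_divide)
qed

lemma sqrt_exp_half: "sqrt (exp t) = exp (t / 2)"
  by (rule real_sqrt_unique) (simp_all add: power2_eq_square field_sum_of_halves flip: exp_add)

lemma gd_nd: "p > 0 \<Longrightarrow> gd a p y = normal_density a (sqrt p) y"
  by (simp add: gd_def normal_density_def)

lemma sqrt_prod:
  fixes a b p q y :: real
  assumes "p > 0" "q > 0"
  shows "sqrt (gd a p y) * sqrt (gd b q y)
       = KK a b p q * normal_density ((a * q + b * p) / (p + q)) (sqrt (2 * p * q / (p + q))) y"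
proof -
  have e1: "2 * pi * p * (2 * pi * q) = (2 * pi)\<^sup>2 * (p * q)" by (simp add: power2_eq_square)
  have "sqrt (2 * pi * p) * sqrt (2 * pi * q) = sqrt ((2 * pi)\<^sup>2 * (p * q))" by (metis e1 real_sqrt_mult)
  also have "\<dots> = 2 * pi * sqrt (p * q)" by (simp add: real_sqrt_mult)
  finally have d0: "sqrt (2 * pi * p) * sqrt (2 * pi * q) = 2 * pi * sqrt (p * q)" .
  have d: "sqrt (sqrt (2 * pi * p)) * sqrt (sqrt (2 * pi * q)) = sqrt (2 * pi * sqrt (p * q))"
    by (metis d0 real_sqrt_mult)
  have s0: "2 * p * q / (p + q) > 0" using assms by simp
  have "sqrt (gd a p y) * sqrt (gd b q y)
      = exp (- (y - a)\<^sup>2 / (2 * p) / 2) * exp (- (y - b)\<^sup>2 / (2 * q) / 2)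
        / (sqrt (sqrt (2 * pi * p)) * sqrt (sqrt (2 * pi * q)))"
    by (simp add: gd_def real_sqrt_divide sqrt_exp_half)
  also have "\<dots> = exp (- (y - a)\<^sup>2 / (2 * p) / 2 + - (y - b)\<^sup>2 / (2 * q) / 2) / sqrt (2 * pi * sqrt (p * q))"
    by (simp only: d exp_add)
  also have "\<dots> = exp (- (a - b)\<^sup>2 / (4 * (p + q)) + - (y - (a * q + b * p) / (p + q))\<^sup>2 / (2 * (2 * p * q / (p + q))))
       / sqrt (2 * pi * sqrt (p * q))"
    by (simp only: expo[OF assms])
  also have "\<dots> = exp (- (a - b)\<^sup>2 / (4 * (p + q))) * exp (- (y - (a * q + b * p) / (p + q))\<^sup>2 / (2 * (2 * p * q / (p + q))))
       * (1 / sqrt (2 * pi * sqrt (p * q)))"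
    by (simp only: exp_add divide_inverse mult_1_left)
  also have "\<dots> = KK a b p q * normal_density ((a * q + b * p) / (p + q)) (sqrt (2 * p * q / (p + q))) y"
    unfolding pref[OF assms] KK_def normal_density_def using s0 by (simp add: mult_ac)
  finally show ?thesis .
qed

lemma integrand:
  fixes a b p q y :: real
  assumes "p > 0" "q > 0"
  shows "(sqrt (gd a p y) - sqrt (gd b q y))\<^sup>2
       = normal_density a (sqrt p) y + normal_density b (sqrt q) y
         - 2 * KK a b p q * normal_density ((a * q + b * p) / (p + q)) (sqrt (2 * p * q / (p + q))) y"
proof -
  have g1: "gd a p y \<ge> 0" "gd b q y \<ge> 0" using assms by (simp_all add: gd_nd)
  have "(sqrt (gd a p y) - sqrt (gd b q y))\<^sup>2
      = (sqrt (gd a p y))\<^sup>2 + (sqrt (gd b q y))\<^sup>2 - 2 * (sqrt (gd a p y) * sqrt (gd b q y))"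
    by (simp add: power2_diff mult.assoc)
  also have "\<dots> = gd a p y + gd b q y - 2 * (sqrt (gd a p y) * sqrt (gd b q y))"
    using g1 by simp
  also have "\<dots> = gd a p y + gd b q y - 2 * (KK a b p q * normal_density ((a * q + b * p) / (p + q)) (sqrt (2 * p * q / (p + q))) y)"
    unfolding sqrt_prod[OF assms] ..
  finally show ?thesis using assms by (simp add: gd_nd mult.assoc)
qed

lemma hell_int:
  fixes a b p q :: real
  assumes "p > 0" "q > 0"
  shows "(\<integral>\<^sup>+ y. ennreal ((sqrt (gd a p y) - sqrt (gd b q y))\<^sup>2) \<partial>lborel) = ennreal (2 - 2 * KK a b p q)"
proof -
  let ?m = "(a * q + b * p) / (p + q)" and ?s = "2 * p * q / (p + q)"
  have s: "sqrt ?s > 0" "sqrt p > 0" "sqrt q > 0" using assms by simp_all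
  let ?F = "\<lambda>y. normal_density a (sqrt p) y + normal_density b (sqrt q) y
         - 2 * KK a b p q * normal_density ?m (sqrt ?s) y"
  have int: "integrable lborel ?F"
    using s by simp
  have "(\<integral>\<^sup>+ y. ennreal ((sqrt (gd a p y) - sqrt (gd b q y))\<^sup>2) \<partial>lborel) = (\<integral>\<^sup>+ y. ennreal (?F y) \<partial>lborel)"
    using integrand[OF assms] by simp
  also have "\<dots> = ennreal (\<integral> y. ?F y \<partial>lborel)"
  proof (rule nn_integral_eq_integral[OF int])
    show "AE x in lborel. 0 \<le> ?F x"
    proof (rule AE_I2)
      fix y show "0 \<le> ?F y" by (metis integrand[OF assms] zero_le_power2)
    qed
  qed
  also have "(\<integral> y. ?F y \<partial>lborel) = 2 - 2 * KK a b p q"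
    using s by (simp add: integrable_diff integrable_add)
  finally show ?thesis .
qed

lemma omr_aux:
  fixes f1 f2 :: real assumes "f2 \<le> f1"
  shows "1 - 2 * sqrt (exp f1 * exp f2) / (exp f1 + exp f2) \<le> (f1 - f2)\<^sup>2 / 4"
proof -
  define u where "u = exp (f1 / 2)"
  define w where "w = exp (f2 / 2)"
  have u0: "u > 0" "w > 0" by (simp_all add: u_def w_def)
  have e1: "exp f1 = u\<^sup>2" unfolding u_def by (simp add: power2_eq_square field_sum_of_halves flip: exp_add)
  have e2: "exp f2 = w\<^sup>2" unfolding w_def by (simp add: power2_eq_square field_sum_of_halves flip: exp_add)
  have sq: "sqrt (exp f1 * exp f2) = u * w" using u0 by (simp add: e1 e2 real_sqrt_mult)
  have pos: "u\<^sup>2 + w\<^sup>2 > 0" "u * u + w * w > 0" using u0 by (simp_all add: add_pos_pos)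
  define t where "t = (f1 - f2) / 2"
  have t0: "t \<ge> 0" using assms by (simp add: t_def)
  have "1 - 2 * sqrt (exp f1 * exp f2) / (exp f1 + exp f2) = 1 - 2 * u * w / (u\<^sup>2 + w\<^sup>2)"
    unfolding sq unfolding e1 e2 by (simp add: mult.assoc)
  also have "\<dots> = ((u\<^sup>2 + w\<^sup>2) - 2 * u * w) / (u\<^sup>2 + w\<^sup>2)"
    using pos(1) u0 by (simp add: diff_divide_distrib)
  also have "\<dots> = (u - w)\<^sup>2 / (u\<^sup>2 + w\<^sup>2)" by (simp add: power2_diff)
  also have "\<dots> \<le> (u - w)\<^sup>2 / u\<^sup>2"
    using u0 pos(1) by (intro divide_left_mono mult_pos_pos) auto
  also have "\<dots> = ((u - w) / u)\<^sup>2" by (simp add: power_divide)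
  also have "(u - w) / u = 1 - w / u" using u0 by (simp add: field_simps)
  also have "w / u = exp (- t)"
  proof -
    have "- t = f2 / 2 - f1 / 2" by (simp add: t_def field_simps)
    thus ?thesis by (simp add: u_def w_def exp_diff)
  qed
  also have "(1 - exp (- t))\<^sup>2 \<le> t\<^sup>2"
  proof (rule power_mono)
    show "1 - exp (- t) \<le> t" using exp_ge_add_one_self[of "- t"] by linarith
    show "0 \<le> 1 - exp (- t)" using t0 by simp
  qed
  also have "t\<^sup>2 = (f1 - f2)\<^sup>2 / 4" by (simp add: t_def power_divide)
  finally show ?thesis .
qed

lemma omr:
  fixes f1 f2 :: real
  shows "1 - 2 * sqrt (exp f1 * exp f2) / (exp f1 + exp f2) \<le> (f1 - f2)\<^sup>2 / 4"
proof (cases "f2 \<le> f1")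
  case True thus ?thesis by (rule omr_aux)
next
  case False
  hence "1 - 2 * sqrt (exp f2 * exp f1) / (exp f2 + exp f1) \<le> (f2 - f1)\<^sup>2 / 4" by (intro omr_aux) simp
  thus ?thesis by (simp add: mult.commute add.commute power2_commute)
qed

lemma KK_bound:
  fixes a b f1 f2 N :: real
  assumes "\<bar>f1\<bar> \<le> N" "\<bar>f2\<bar> \<le> N"
  shows "2 - 2 * KK a b (exp f1) (exp f2) \<le> exp N / 4 * (a - b)\<^sup>2 + 1 / 2 * (f1 - f2)\<^sup>2"
proof -
  define D where "D = exp f1 + exp f2"
  have D0: "D > 0" by (simp add: D_def add_pos_pos)
  define r where "r = 2 * sqrt (exp f1 * exp f2) / D"
  define E where "E = exp (- (a - b)\<^sup>2 / (4 * D))"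
  have r0: "0 \<le> r" using D0 by (simp add: r_def)
  have "sqrt (exp f1 * exp f2) \<le> D / 2" unfolding D_def by (rule arith_geo_mean_sqrt) simp_all
  hence r1: "r \<le> 1" using D0 by (simp add: r_def divide_le_eq)
  have sr1: "sqrt r \<le> 1" using r1 by simp
  have "sqrt r * sqrt r \<le> sqrt r" using r0 sr1 by (intro mult_left_le_one_le) simp_all
  hence A: "1 - sqrt r \<le> 1 - r" using r0 by simp
  have R: "1 - r \<le> (f1 - f2)\<^sup>2 / 4" using omr[of f1 f2] by (simp add: r_def D_def)
  have q0: "0 \<le> (a - b)\<^sup>2 / (4 * D)" using D0 by simp
  have E0: "0 \<le> E" "E \<le> 1" using q0 by (simp_all add: E_def)
  have h: "1 + (- (a - b)\<^sup>2 / (4 * D)) \<le> E" unfolding E_def by (rule exp_ge_add_one_self)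
  have "(- (a - b)\<^sup>2 / (4 * D)) = - ((a - b)\<^sup>2 / (4 * D))" by simp
  with h have E1: "1 - E \<le> (a - b)\<^sup>2 / (4 * D)" by linarith
  have m1: "- N \<le> f1" "- N \<le> f2" using assms by (simp_all add: abs_le_iff)
  have "exp (- N) \<le> exp f1" "exp (- N) \<le> exp f2" using m1 by simp_all
  moreover have "4 * D = 4 * exp f1 + 4 * exp f2" by (simp add: D_def)
  ultimately have s8: "8 * exp (- N) \<le> 4 * D" by linarith
  have "1 / (4 * D) \<le> 1 / (8 * exp (- N))"
    using s8 D0 by (intro divide_left_mono) (auto intro: mult_pos_pos)
  also have "1 / (8 * exp (- N)) = exp N / 8" by (simp add: exp_minus field_simps)
  finally have c: "1 / (4 * D) \<le> exp N / 8" .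
  have "(a - b)\<^sup>2 / (4 * D) = (a - b)\<^sup>2 * (1 / (4 * D))" by simp
  also have "\<dots> \<le> (a - b)\<^sup>2 * (exp N / 8)" using c by (intro mult_left_mono) auto
  finally have E2: "(a - b)\<^sup>2 / (4 * D) \<le> exp N / 8 * (a - b)\<^sup>2" by (simp add: mult.commute)
  have KKe: "KK a b (exp f1) (exp f2) = sqrt r * E" by (simp add: KK_def r_def E_def D_def)
  have m: "sqrt r * (1 - E) \<le> 1 - E" using E0 r0 sr1 by (intro mult_left_le_one_le) simp_all
  have "1 - sqrt r * E = (1 - sqrt r) + sqrt r * (1 - E)" by (simp add: algebra_simps)
  with m A R E1 E2 show ?thesis unfolding KKe by linarith
qed

lemma gauss_dens_gd: "gauss_dens \<eta> V x y = gd (\<eta> x) (V x) y"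
  by (simp add: gauss_dens_def gd_def)

lemma dn_bound:
  fixes Q :: "'x measure" and \<eta>1 \<eta>2 f1 f2 :: "'x \<Rightarrow> real"
  assumes bnd: "\<forall>x\<in>space Q. \<bar>f1 x\<bar> \<le> N \<and> \<bar>f2 x\<bar> \<le> N"
    and m1[measurable]: "\<eta>1 \<in> borel_measurable Q" and m2[measurable]: "\<eta>2 \<in> borel_measurable Q"
    and m3[measurable]: "f1 \<in> borel_measurable Q" and m4[measurable]: "f2 \<in> borel_measurable Q"
  shows "dn_sq Q (\<eta>1, f1) (\<eta>2, f2) \<le> ennreal (exp N / 4) * L2_sq Q \<eta>1 \<eta>2 + ennreal (1 / 2) * L2_sq Q f1 f2"
proof -
  have "dn_sq Q (\<eta>1, f1) (\<eta>2, f2) = (\<integral>\<^sup>+ x. ennreal (2 - 2 * KK (\<eta>1 x) (\<eta>2 x) (exp (f1 x)) (exp (f2 x))) \<partial>Q)"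
    unfolding dn_sq_def by (simp add: gauss_dens_gd hell_int)
  also have "\<dots> \<le> (\<integral>\<^sup>+ x. ennreal (exp N / 4 * (\<eta>1 x - \<eta>2 x)\<^sup>2) + ennreal (1 / 2 * (f1 x - f2 x)\<^sup>2) \<partial>Q)"
  proof (rule nn_integral_mono)
    fix x assume "x \<in> space Q"
    hence h: "2 - 2 * KK (\<eta>1 x) (\<eta>2 x) (exp (f1 x)) (exp (f2 x))
        \<le> exp N / 4 * (\<eta>1 x - \<eta>2 x)\<^sup>2 + 1 / 2 * (f1 x - f2 x)\<^sup>2"
      using bnd by (intro KK_bound) auto
    have "ennreal (exp N / 4 * (\<eta>1 x - \<eta>2 x)\<^sup>2 + 1 / 2 * (f1 x - f2 x)\<^sup>2)
        = ennreal (exp N / 4 * (\<eta>1 x - \<eta>2 x)\<^sup>2) + ennreal (1 / 2 * (f1 x - f2 x)\<^sup>2)"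
      by (intro ennreal_plus) auto
    with ennreal_leI[OF h] show "ennreal (2 - 2 * KK (\<eta>1 x) (\<eta>2 x) (exp (f1 x)) (exp (f2 x)))
        \<le> ennreal (exp N / 4 * (\<eta>1 x - \<eta>2 x)\<^sup>2) + ennreal (1 / 2 * (f1 x - f2 x)\<^sup>2)" by simp
  qed
  also have "\<dots> = (\<integral>\<^sup>+ x. ennreal (exp N / 4 * (\<eta>1 x - \<eta>2 x)\<^sup>2) \<partial>Q) + (\<integral>\<^sup>+ x. ennreal (1 / 2 * (f1 x - f2 x)\<^sup>2) \<partial>Q)"
    by (rule nn_integral_add) measurable
  also have "(\<integral>\<^sup>+ x. ennreal (exp N / 4 * (\<eta>1 x - \<eta>2 x)\<^sup>2) \<partial>Q) = (\<integral>\<^sup>+ x. ennreal (exp N / 4) * ennreal ((\<eta>1 x - \<eta>2 x)\<^sup>2) \<partial>Q)"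
    by (intro nn_integral_cong ennreal_mult) auto
  also have "\<dots> = ennreal (exp N / 4) * L2_sq Q \<eta>1 \<eta>2"
    unfolding L2_sq_def by (rule nn_integral_cmult) measurable
  also have "(\<integral>\<^sup>+ x. ennreal (1 / 2 * (f1 x - f2 x)\<^sup>2) \<partial>Q) = (\<integral>\<^sup>+ x. ennreal (1 / 2) * ennreal ((f1 x - f2 x)\<^sup>2) \<partial>Q)"
    by (intro nn_integral_cong ennreal_mult) auto
  also have "\<dots> = ennreal (1 / 2) * L2_sq Q f1 f2"
    unfolding L2_sq_def by (rule nn_integral_cmult) measurable
  finally show ?thesis .
qed

lemma fin_arith:
  fixes N \<epsilon> :: real and X Y :: ennreal
  assumes "N > 0" "\<epsilon> > 0" "X \<le> ennreal ((\<epsilon> / exp N)\<^sup>2)" "Y \<le> ennreal (\<epsilon>\<^sup>2)"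
  shows "ennreal (exp N / 4) * X + ennreal (1 / 2) * Y \<le> ennreal ((3 * \<epsilon>)\<^sup>2)"
proof -
  have "ennreal (exp N / 4) * X + ennreal (1 / 2) * Y
      \<le> ennreal (exp N / 4) * ennreal ((\<epsilon> / exp N)\<^sup>2) + ennreal (1 / 2) * ennreal (\<epsilon>\<^sup>2)"
    using assms by (intro add_mono mult_left_mono) auto
  also have "\<dots> = ennreal (exp N / 4 * (\<epsilon> / exp N)\<^sup>2) + ennreal (1 / 2 * \<epsilon>\<^sup>2)"
  proof -
    have a: "ennreal (exp N / 4) * ennreal ((\<epsilon> / exp N)\<^sup>2) = ennreal (exp N / 4 * (\<epsilon> / exp N)\<^sup>2)"
      by (rule ennreal_mult[symmetric]) auto
    have b: "ennreal (1 / 2) * ennreal (\<epsilon>\<^sup>2) = ennreal (1 / 2 * \<epsilon>\<^sup>2)"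
      by (rule ennreal_mult[symmetric]) auto
    show ?thesis by (simp only: a b)
  qed
  also have "\<dots> = ennreal (exp N / 4 * (\<epsilon> / exp N)\<^sup>2 + 1 / 2 * \<epsilon>\<^sup>2)"
    by (rule ennreal_plus[symmetric]) auto
  also have "\<dots> \<le> ennreal ((3 * \<epsilon>)\<^sup>2)"
  proof (rule ennreal_leI)
    have e: "exp N / 4 * (\<epsilon> / exp N)\<^sup>2 = \<epsilon>\<^sup>2 / (4 * exp N)" by (simp add: power2_eq_square field_simps)
    have "1 \<le> exp N" using assms(1) by simp
    hence "1 \<le> 4 * exp N" by linarith
    hence "\<epsilon>\<^sup>2 / (4 * exp N) \<le> \<epsilon>\<^sup>2 / 1" by (intro divide_left_mono) auto
    moreover have "(3 * \<epsilon>)\<^sup>2 = 9 * \<epsilon>\<^sup>2" by (simp add: power_mult_distrib)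
    moreover have "0 \<le> \<epsilon>\<^sup>2" by simp
    ultimately show "exp N / 4 * (\<epsilon> / exp N)\<^sup>2 + 1 / 2 * \<epsilon>\<^sup>2 \<le> (3 * \<epsilon>)\<^sup>2" unfolding e by linarith
  qed
  finally show ?thesis .
qed

lemma cov_le:
  assumes "finite C" "C \<subseteq> S" "S \<subseteq> (\<Union>c\<in>C. {s. d c s \<le> ennreal (e\<^sup>2)})"
  shows "covering_number d e S \<le> enat (card C)"
  unfolding covering_number_def by (rule INF_lower) (use assms in auto)

lemma cov_obtain:
  assumes "covering_number d e S < \<infinity>"
  obtains C where "finite C" "C \<subseteq> S" "S \<subseteq> (\<Union>c\<in>C. {s. d c s \<le> ennreal (e\<^sup>2)})"
    "covering_number d e S = enat (card C)"
proof -
  let ?A = "{C. finite C \<and> C \<subseteq> S \<and> S \<subseteq> (\<Union>c\<in>C. {s. d c s \<le> ennreal (e\<^sup>2)})}"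
  have "?A \<noteq> {}"
  proof
    assume A0: "?A = {}"
    have "covering_number d e S = (INF C\<in>?A. enat (card C))" by (simp only: covering_number_def)
    also have "\<dots> = \<infinity>" unfolding A0 by (simp add: top_enat_def)
    finally have "covering_number d e S = \<infinity>" .
    with assms show False by simp
  qed
  then obtain C0 where C0: "C0 \<in> ?A" by blast
  define n where "n = (LEAST n. \<exists>C\<in>?A. card C = n)"
  have "\<exists>C\<in>?A. card C = n" unfolding n_def by (rule LeastI_ex) (use C0 in blast)
  then obtain C where C: "C \<in> ?A" "card C = n" by blast
  have "covering_number d e S = enat n"
  proof (rule antisym)
    show "covering_number d e S \<le> enat n" using C cov_le[of C S d e] by auto
    show "enat n \<le> covering_number d e S" unfolding covering_number_def
    proof (rule INF_greatest)
      fix C' assume "C' \<in> ?A"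
      hence "n \<le> card C'" unfolding n_def by (intro Least_le) blast
      thus "enat n \<le> enat (card C')" by simp
    qed
  qed
  with C show ?thesis using that by auto
qed

lemma ln_nat_nonneg: "0 \<le> ln (real (k::nat))"
  by (cases "k = 0") auto

lemma ln_nat:
  fixes n n1 n2 :: nat
  assumes "n \<le> n1 * n2"
  shows "ln (real n) \<le> ln (real n1) + ln (real n2)"
proof (cases "n = 0")
  case True thus ?thesis using ln_nat_nonneg[of n1] ln_nat_nonneg[of n2] by simp
next
  case False
  hence p: "n1 > 0" "n2 > 0" using assms by (auto intro: Nat.gr0I)
  have "real n \<le> real n1 * real n2" using assms by (metis of_nat_le_iff of_nat_mult)
  hence "ln (real n) \<le> ln (real n1 * real n2)" using False p by (subst ln_le_cancel_iff) auto
  also have "\<dots> = ln (real n1) + ln (real n2)" using p by (simp add: ln_mult)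
  finally show ?thesis .
qed

lemma main_lem:
  fixes Q :: "'x measure" and T1 T2 :: "('x \<Rightarrow> real) set" and Nn \<epsilon> :: real
  assumes h1: "\<forall>\<eta>\<in>T1. \<eta> \<in> borel_measurable Q" and h2: "\<forall>f\<in>T2. f \<in> borel_measurable Q"
    and hN: "Nn > 0" and hb: "\<forall>f\<in>T2. \<forall>x\<in>space Q. \<bar>f x\<bar> \<le> Nn" and he: "\<epsilon> > 0"
    and c1: "covering_number (L2_sq Q) (\<epsilon> / exp Nn) T1 < \<infinity>"
    and c2: "covering_number (L2_sq Q) \<epsilon> T2 < \<infinity>"
  shows "covering_number (dn_sq Q) (3 * \<epsilon>) (T1 \<times> T2) < \<infinity> \<and>
         ln (real (the_enat (covering_number (dn_sq Q) (3 * \<epsilon>) (T1 \<times> T2))))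
           \<le> 1 * (ln (real (the_enat (covering_number (L2_sq Q) (\<epsilon> / exp Nn) T1)))
                  + ln (real (the_enat (covering_number (L2_sq Q) \<epsilon> T2))))"
proof -
  obtain C1 where C1: "finite C1" "C1 \<subseteq> T1" "T1 \<subseteq> (\<Union>c\<in>C1. {s. L2_sq Q c s \<le> ennreal ((\<epsilon> / exp Nn)\<^sup>2)})"
    "covering_number (L2_sq Q) (\<epsilon> / exp Nn) T1 = enat (card C1)" using cov_obtain[OF c1] by blast
  obtain C2 where C2: "finite C2" "C2 \<subseteq> T2" "T2 \<subseteq> (\<Union>c\<in>C2. {s. L2_sq Q c s \<le> ennreal (\<epsilon>\<^sup>2)})"
    "covering_number (L2_sq Q) \<epsilon> T2 = enat (card C2)" using cov_obtain[OF c2] by blast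
  have cover: "T1 \<times> T2 \<subseteq> (\<Union>c\<in>C1 \<times> C2. {s. dn_sq Q c s \<le> ennreal ((3 * \<epsilon>)\<^sup>2)})"
  proof
    fix z assume "z \<in> T1 \<times> T2"
    then obtain \<eta> f where z: "z = (\<eta>, f)" "\<eta> \<in> T1" "f \<in> T2" by auto
    from z(2) C1(3) obtain k1 where k1: "k1 \<in> C1" "L2_sq Q k1 \<eta> \<le> ennreal ((\<epsilon> / exp Nn)\<^sup>2)" by blast
    from z(3) C2(3) obtain k2 where k2: "k2 \<in> C2" "L2_sq Q k2 f \<le> ennreal (\<epsilon>\<^sup>2)" by blast
    have "k1 \<in> T1" "k2 \<in> T2" using k1 k2 C1 C2 by auto
    have "dn_sq Q (k1, k2) (\<eta>, f) \<le> ennreal (exp Nn / 4) * L2_sq Q k1 \<eta> + ennreal (1 / 2) * L2_sq Q k2 f"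
      by (rule dn_bound) (use hb h1 h2 z \<open>k1 \<in> T1\<close> \<open>k2 \<in> T2\<close> in auto)
    also have "\<dots> \<le> ennreal ((3 * \<epsilon>)\<^sup>2)" by (rule fin_arith[OF hN he k1(2) k2(2)])
    finally show "z \<in> (\<Union>c\<in>C1 \<times> C2. {s. dn_sq Q c s \<le> ennreal ((3 * \<epsilon>)\<^sup>2)})"
      using k1 k2 z by blast
  qed
  have sub: "C1 \<times> C2 \<subseteq> T1 \<times> T2" using C1(2) C2(2) by auto
  have le: "covering_number (dn_sq Q) (3 * \<epsilon>) (T1 \<times> T2) \<le> enat (card C1 * card C2)"
    using cov_le[OF finite_cartesian_product[OF C1(1) C2(1)] sub cover] by (simp add: card_cartesian_product)
  then obtain n where n: "covering_number (dn_sq Q) (3 * \<epsilon>) (T1 \<times> T2) = enat n" "n \<le> card C1 * card C2"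
    by (cases "covering_number (dn_sq Q) (3 * \<epsilon>) (T1 \<times> T2)") auto
  show ?thesis using n C1(4) C2(4) ln_nat[OF n(2)] by simp
qed

theorem lemma1:
  shows "\<exists>C>0. \<forall>(Q :: (real ^ 'd) measure) (\<Theta>\<eta> :: ((real ^ 'd) \<Rightarrow> real) set)
                 (\<Theta>f :: ((real ^ 'd) \<Rightarrow> real) set) (Nn :: real) (\<epsilon> :: real).
     prob_space Q \<and> sets Q = sets (restrict_space borel unit_cube) \<and>
     (\<forall>\<eta>\<in>\<Theta>\<eta>. \<eta> \<in> borel_measurable Q) \<and> (\<forall>f\<in>\<Theta>f. f \<in> borel_measurable Q) \<and>
     Nn > 0 \<and> (\<forall>f\<in>\<Theta>f. \<forall>x\<in>unit_cube. \<bar>f x\<bar> \<le> Nn) \<and> \<epsilon> > 0 \<and>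
     covering_number (L2_sq Q) (\<epsilon> / exp Nn) \<Theta>\<eta> < \<infinity> \<and>
     covering_number (L2_sq Q) \<epsilon> \<Theta>f < \<infinity>
     \<longrightarrow> covering_number (dn_sq Q) (3 * \<epsilon>) (\<Theta>\<eta> \<times> \<Theta>f) < \<infinity> \<and>
         ln (real (the_enat (covering_number (dn_sq Q) (3 * \<epsilon>) (\<Theta>\<eta> \<times> \<Theta>f))))
           \<le> C * (ln (real (the_enat (covering_number (L2_sq Q) (\<epsilon> / exp Nn) \<Theta>\<eta>)))
                  + ln (real (the_enat (covering_number (L2_sq Q) \<epsilon> \<Theta>f))))"
  apply (rule exI[where x = "1::real"])
  apply (rule conjI, simp)
  apply (intro allI impI)
  apply (elim conjE)
  apply (rule main_lem)
  apply (auto dest!: sets_eq_imp_space_eq simp: space_restrict_space)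
  done

end
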